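(* Let $n,m$ be positive integers, $\Lambda:\mathbb{R}^{n\times n}\to\mathbb{R}^{m\times m}$ linear and $Y\in\mathbb{R}^{m\times m}$. For a real parameter $k\ge1$, call a triple $(\Phi_I,\Phi_V,\Phi_\phi)$ of real symmetric operators on $\mathcal{H}_{A_1}\otimes\mathcal{H}_{B_1}=\mathbb{R}^n\otimes\mathbb{R}^n$ $k$-feasible if \[ \Phi_V=V\Phi_I,\quad \Phi_\phi=\Phi_V^{T_{A_1}},\quad \Phi_I^{T_{A_1}}=\Phi_I,\quad V\Phi_\phi=\Phi_\phi,\quad \Phi_I+\Phi_V\ge0,\quad \Phi_I-\Phi_V\ge0,\quad \Phi_I+\Phi_V+k\Phi_\phi\ge0, \] \[ k^2\operatorname{Tr}(\Phi_I)+k\operatorname{Tr}(\Phi_V)+k\operatorname{Tr}(\Phi_\phi)=1,\qquad (\Lambda_{A_1}\otimes\mathrm{id}_{B_1})(k\Phi_I+\Phi_V+\Phi_\phi)=Y\otimes\operatorname{Tr}_{A_1}(k\Phi_I+\Phi_V+\Phi_\phi). \] If $(\Phi_I,\Phi_V,\Phi_\phi)$ is $k$-feasible with $k\ge1$, then for every real $k'\ge k$ there is a $k'$-feasible triple $(\Phi_I',\Phi_V',\Phi_\phi')$ with $k'^2\Phi_I'+k'\Phi_V'+k'\Phi_\phi'=k^2\Phi_I+k\Phi_V+k\Phi_\phi$.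
   Context: $V$ is the swap operator on $\mathbb{R}^n\otimes\mathbb{R}^n$; $T_{A_1}$ denotes the partial transpose on the first factor; $\operatorname{Tr}_{A_1}$ is the partial trace over the first factor; $\Lambda_{A_1}\otimes\mathrm{id}_{B_1}$ applies $\Lambda$ to the first factor; $\ge0$ means positive semidefinite. (This is the symmetry-reduced second level of the real hierarchy, in which the rank bound $k$ appears as a parameter.) *)

theory Defs
  imports "HOL-Analysis.Analysis"
begin

text \<open>Operators on R^n (x) R^n are real matrices indexed by pairs ('n * 'n),
  the first component being the A1 factor, the second the B1 factor.\<close>

type_synonym ('a,'b) bop = "real ^ ('a \<times> 'b) ^ ('a \<times> 'b)"

definition swapop :: "('n::finite, 'n) bop" where
  "swapop = (\<chi> p q. if fst p = snd q \<and> snd p = fst q then 1 else 0)"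

definition ptransA :: "('a::finite, 'b::finite) bop \<Rightarrow> ('a, 'b) bop" where
  "ptransA X = (\<chi> p q. X $ (fst q, snd p) $ (fst p, snd q))"

definition ptraceA :: "('a::finite, 'b::finite) bop \<Rightarrow> real ^ 'b ^ 'b" where
  "ptraceA X = (\<chi> b b'. \<Sum>a\<in>UNIV. X $ (a,b) $ (a,b'))"

definition mtrace :: "real ^ 'i ^ 'i \<Rightarrow> real" where
  "mtrace X = (\<Sum>i\<in>UNIV. X $ i $ i)"

definition symm :: "real ^ 'i ^ 'i \<Rightarrow> bool" where
  "symm X \<longleftrightarrow> transpose X = X"

definition psd :: "real ^ 'i ^ 'i \<Rightarrow> bool" where
  "psd X \<longleftrightarrow> symm X \<and> (\<forall>x. x \<bullet> (X *v x) \<ge> 0)"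

text \<open>(Lambda_{A1} (x) id_{B1}) X: apply Lambda to each block X^{bb'}.\<close>
definition mapA :: "(real ^ 'n ^ 'n \<Rightarrow> real ^ 'm ^ 'm) \<Rightarrow> ('n::finite, 'b::finite) bop \<Rightarrow> ('m::finite, 'b) bop" where
  "mapA L X = (\<chi> p q. L (\<chi> a a'. X $ (a, snd p) $ (a', snd q)) $ fst p $ fst q)"

definition kron :: "real ^ 'a ^ 'a \<Rightarrow> real ^ 'b ^ 'b \<Rightarrow> ('a::finite, 'b::finite) bop" where
  "kron Y Z = (\<chi> p q. Y $ fst p $ fst q * Z $ snd p $ snd q)"

definition feasible :: "(real ^ 'n ^ 'n \<Rightarrow> real ^ 'm ^ 'm) \<Rightarrow> real ^ 'm ^ 'm \<Rightarrow> real
    \<Rightarrow> ('n::finite, 'n) bop \<Rightarrow> ('n, 'n) bop \<Rightarrow> ('n, 'n) bop \<Rightarrow> bool" where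
  "feasible L Y k PI PV Pp \<longleftrightarrow>
     symm PI \<and> symm PV \<and> symm Pp \<and>
     PV = swapop ** PI \<and> Pp = ptransA PV \<and> ptransA PI = PI \<and> swapop ** Pp = Pp \<and>
     psd (PI + PV) \<and> psd (PI - PV) \<and> psd (PI + PV + k *\<^sub>R Pp) \<and>
     k^2 * mtrace PI + k * mtrace PV + k * mtrace Pp = 1 \<and>
     mapA L (k *\<^sub>R PI + PV + Pp) = kron Y (ptraceA (k *\<^sub>R PI + PV + Pp))"

end

theory Submission imports Defs begin

lemma swap_mult: "swapop ** (X::('n::finite,'n) bop) = (\<chi> p q. X $ (snd p, fst p) $ q)"
proof -
  have "\<And>p q. (\<Sum>r\<in>UNIV. (if fst p = snd r \<and> snd p = fst r then 1 else 0) * X $ r $ q) = X $ (snd p, fst p) $ q"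
  proof -
    fix p q :: "'n \<times> 'n"
    have "(\<Sum>r\<in>UNIV. (if fst p = snd r \<and> snd p = fst r then 1 else 0) * X $ r $ q) = (\<Sum>r\<in>UNIV. if r = (snd p, fst p) then X $ r $ q else 0)"
      by (rule sum.cong) auto
    then show "(\<Sum>r\<in>UNIV. (if fst p = snd r \<and> snd p = fst r then 1 else 0) * X $ r $ q) = X $ (snd p, fst p) $ q"
      by simp
  qed
  then show ?thesis by (simp add: matrix_matrix_mult_def swapop_def vec_eq_iff)
qed

lemma swap_swap: "swapop ** (swapop ** (X::('n::finite,'n) bop)) = X"
  by (simp add: swap_mult vec_eq_iff)

lemma swap_lin: "swapop ** (a *\<^sub>R (X::('n::finite,'n) bop) + b *\<^sub>R Z) = a *\<^sub>R (swapop ** X) + b *\<^sub>R (swapop ** Z)"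
  by (simp add: swap_mult vec_eq_iff)

lemma pt_lin: "ptransA (a *\<^sub>R X + b *\<^sub>R Z) = a *\<^sub>R ptransA X + b *\<^sub>R ptransA Z"
  by (simp add: ptransA_def vec_eq_iff)

lemma pt_pt: "ptransA (ptransA X) = X"
  by (simp add: ptransA_def vec_eq_iff)

lemma symm_lin: "symm X \<Longrightarrow> symm Z \<Longrightarrow> symm (a *\<^sub>R X + b *\<^sub>R Z)"
  by (simp add: symm_def transpose_def vec_eq_iff)

lemma psd_lin: assumes "psd (X::real^'i::finite^'i)" "psd Z" "a \<ge> 0" "b \<ge> 0"
  shows "psd (a *\<^sub>R X + b *\<^sub>R Z)"
proof -
  have "\<And>x. x \<bullet> ((a *\<^sub>R X + b *\<^sub>R Z) *v x) = a * (x \<bullet> (X *v x)) + b * (x \<bullet> (Z *v x))"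
    by (simp add: matrix_vector_mult_add_rdistrib scaleR_matrix_vector_assoc[symmetric] inner_add_right)
  then show ?thesis using assms unfolding psd_def by (simp add: symm_lin)
qed

lemma mtrace_lin: "mtrace (a *\<^sub>R X + b *\<^sub>R Z) = a * mtrace X + b * mtrace Z"
  by (simp add: mtrace_def sum.distrib sum_distrib_left)

lemma mapA_scale: assumes "linear L" shows "mapA L (c *\<^sub>R X) = c *\<^sub>R mapA L X"
proof -
  have "\<And>b b'. (\<chi> a a'. (c *\<^sub>R X) $ (a, b) $ (a', b')) = c *\<^sub>R (\<chi> a a'. X $ (a, b) $ (a', b'))"
    by (simp add: vec_eq_iff)
  then have "\<And>b b'. L (\<chi> a a'. (c *\<^sub>R X) $ (a, b) $ (a', b')) = c *\<^sub>R L (\<chi> a a'. X $ (a, b) $ (a', b'))"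
    using linear_scale[OF assms] by metis
  then show ?thesis unfolding mapA_def vec_eq_iff by (simp del: vector_scaleR_component) simp
qed

lemma kron_pt_scale: "kron Y (ptraceA (c *\<^sub>R X)) = c *\<^sub>R kron Y (ptraceA X)"
  by (simp add: kron_def ptraceA_def vec_eq_iff sum_distrib_left mult_ac)

theorem mainTheorem13:
  fixes L :: "real ^ 'n::finite ^ 'n \<Rightarrow> real ^ 'm::finite ^ 'm"
    and Y :: "real ^ 'm ^ 'm"
    and k :: real
    and PI PV Pp :: "('n, 'n) bop"
  assumes "linear L"
    and "k \<ge> 1"
    and "feasible L Y k PI PV Pp"
  shows "\<forall>k'::real. k' \<ge> k \<longrightarrow>
    (\<exists>PI' PV' Pp'. feasible L Y k' PI' PV' Pp' \<and>
       k'^2 *\<^sub>R PI' + k' *\<^sub>R PV' + k' *\<^sub>R Pp' = k^2 *\<^sub>R PI + k *\<^sub>R PV + k *\<^sub>R Pp)"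
proof (intro allI impI)
  fix k' :: real
  assume kk: "k' \<ge> k"
  show "\<exists>PI' PV' Pp'. feasible L Y k' PI' PV' Pp' \<and>
       k'^2 *\<^sub>R PI' + k' *\<^sub>R PV' + k' *\<^sub>R Pp' = k^2 *\<^sub>R PI + k *\<^sub>R PV + k *\<^sub>R Pp"
  proof (cases "k' = k")
    case True
    then show ?thesis using assms(3) by blast
  next
    case False
    with kk have kk': "k' > k" by simp
    with assms(2) have k1: "k' > 1" by simp
    have F: "symm PI" "symm PV" "symm Pp" "PV = swapop ** PI" "Pp = ptransA PV"
      "ptransA PI = PI" "swapop ** Pp = Pp" "psd (PI + PV)" "psd (PI - PV)"
      "psd (PI + PV + k *\<^sub>R Pp)"
      "k^2 * mtrace PI + k * mtrace PV + k * mtrace Pp = 1"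
      "mapA L (k *\<^sub>R PI + PV + Pp) = kron Y (ptraceA (k *\<^sub>R PI + PV + Pp))"
      using assms(3) unfolding feasible_def by auto
    define \<beta> where "\<beta> = k * (k' - k) / (k' * (k' - 1) * (k' + 2))"
    define \<alpha> where "\<alpha> = k / k' - (k' + 1) * \<beta>"
    have b0: "\<beta> \<ge> 0" unfolding \<beta>_def using kk' k1 assms(2) by simp
    have ab: "\<alpha> - \<beta> = (k / k') * ((k - 1) / (k' - 1))"
    proof -
      have nz: "k' \<noteq> 0" "k' - 1 \<noteq> 0" "k' + 2 \<noteq> 0" using k1 by auto
      have "(k' + 2) * \<beta> = k * (k' - k) / (k' * (k' - 1))" unfolding \<beta>_def using nz by (simp add: divide_simps del: ring_distribs)
      moreover have "\<alpha> - \<beta> = k / k' - (k' + 2) * \<beta>" unfolding \<alpha>_def by (simp add: algebra_simps)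
      ultimately show ?thesis using nz by (simp add: field_simps) algebra
    qed
    have ab0: "\<alpha> - \<beta> \<ge> 0" unfolding ab using k1 assms(2) by simp
    have hD: "\<beta> * (k' * (k' - 1) * (k' + 2)) = k * (k' - k)"
      unfolding \<beta>_def using k1 by simp
    have a': "k' * \<alpha> = k - k' * (k' + 1) * \<beta>" unfolding \<alpha>_def using k1 by (simp add: field_simps)
    have "k'^2 * \<alpha> + 2 * k' * \<beta> = k' * (k' * \<alpha>) + 2 * k' * \<beta>" by (simp add: power2_eq_square)
    also have "\<dots> = k' * (k - k' * (k' + 1) * \<beta>) + 2 * k' * \<beta>" by (simp only: a')
    also have "\<dots> = k * k' - \<beta> * (k' * (k' - 1) * (k' + 2))" by (simp add: algebra_simps)
    also have "\<dots> = k^2" unfolding hD by (simp add: algebra_simps power2_eq_square)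
    finally have c1: "k'^2 * \<alpha> + 2 * k' * \<beta> = k^2" .
    have c2: "k'^2 * \<beta> + k' * \<alpha> + k' * \<beta> = k"
      using a' by algebra
    define A where "A = \<alpha> *\<^sub>R PI + \<beta> *\<^sub>R (PV + Pp)"
    define B where "B = \<alpha> *\<^sub>R PV + \<beta> *\<^sub>R (PI + Pp)"
    define C where "C = \<alpha> *\<^sub>R Pp + \<beta> *\<^sub>R (PI + PV)"
    have sPV: "swapop ** PV = PI" using F(4) swap_swap by metis
    have tPp: "ptransA Pp = PV" using F(5) pt_pt by metis
    have tPV: "ptransA PV = Pp" using F(5) by simp
    have e1: "B = swapop ** A"
      unfolding A_def B_def using swap_lin[of \<alpha> PI \<beta> "PV + Pp"] swap_lin[of 1 PV 1 Pp]
      by (simp add: sPV F(4)[symmetric] F(7) algebra_simps)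
    have e2: "C = ptransA B"
      unfolding C_def B_def using pt_lin[of \<alpha> PV \<beta> "PI + Pp"] pt_lin[of 1 PI 1 Pp]
      by (simp add: tPV tPp F(6) algebra_simps)
    have e3: "ptransA A = A"
      unfolding A_def using pt_lin[of \<alpha> PI \<beta> "PV + Pp"] pt_lin[of 1 PV 1 Pp]
      by (simp add: tPV tPp F(6) algebra_simps)
    have e4: "swapop ** C = C"
      unfolding C_def using swap_lin[of \<alpha> Pp \<beta> "PI + PV"] swap_lin[of 1 PI 1 PV]
      by (simp add: sPV F(4)[symmetric] F(7) algebra_simps)
    have sA: "symm A" "symm B" "symm C" unfolding A_def B_def C_def
      using F(1,2,3) symm_lin by (metis scaleR_one)+
    have X: "k'^2 *\<^sub>R A + k' *\<^sub>R B + k' *\<^sub>R C = k^2 *\<^sub>R PI + k *\<^sub>R PV + k *\<^sub>R Pp"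
    proof -
      have "k'^2 *\<^sub>R A + k' *\<^sub>R B + k' *\<^sub>R C =
        (k'^2 * \<alpha> + 2 * k' * \<beta>) *\<^sub>R PI + (k'^2 * \<beta> + k' * \<alpha> + k' * \<beta>) *\<^sub>R PV
        + (k'^2 * \<beta> + k' * \<alpha> + k' * \<beta>) *\<^sub>R Pp"
        unfolding A_def B_def C_def by (simp add: vec_eq_iff algebra_simps)
      then show ?thesis using c1 c2 by simp
    qed
    have Y: "k' *\<^sub>R A + B + C = (k / k') *\<^sub>R (k *\<^sub>R PI + PV + Pp)"
    proof -
      have "k' *\<^sub>R A + B + C = (k' * \<alpha> + 2 * \<beta>) *\<^sub>R PI + (k' * \<beta> + \<alpha> + \<beta>) *\<^sub>R PV
        + (k' * \<beta> + \<alpha> + \<beta>) *\<^sub>R Pp"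
        unfolding A_def B_def C_def by (simp add: vec_eq_iff algebra_simps)
      also have "\<dots> = (k / k' * k) *\<^sub>R PI + (k / k') *\<^sub>R PV + (k / k') *\<^sub>R Pp"
      proof -
        have h1: "k' * \<alpha> + 2 * \<beta> = k / k' * k" using c1 k1
          by (simp add: field_simps power2_eq_square)
        have h2: "k' * \<beta> + \<alpha> + \<beta> = k / k'" using c2 k1
          by (simp add: field_simps power2_eq_square)
        show ?thesis by (simp only: h1 h2)
      qed
      also have "\<dots> = (k / k') *\<^sub>R (k *\<^sub>R PI + PV + Pp)" by (simp add: scaleR_add_right)
      finally show ?thesis .
    qed
    have tr: "k'^2 * mtrace A + k' * mtrace B + k' * mtrace C = 1"
    proof -
      have "mtrace (k'^2 *\<^sub>R A + k' *\<^sub>R B + k' *\<^sub>R C) = k'^2 * mtrace A + k' * mtrace B + k' * mtrace C"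
        using mtrace_lin[of "k'^2" A "k'" B] mtrace_lin[of 1 "k'^2 *\<^sub>R A + k' *\<^sub>R B" k' C] by simp
      moreover have "mtrace (k^2 *\<^sub>R PI + k *\<^sub>R PV + k *\<^sub>R Pp) = k^2 * mtrace PI + k * mtrace PV + k * mtrace Pp"
        using mtrace_lin[of "k^2" PI "k" PV] mtrace_lin[of 1 "k^2 *\<^sub>R PI + k *\<^sub>R PV" k Pp] by simp
      ultimately show ?thesis using X F(11) by simp
    qed
    have mp: "mapA L (k' *\<^sub>R A + B + C) = kron Y (ptraceA (k' *\<^sub>R A + B + C))"
      unfolding Y mapA_scale[OF assms(1)] kron_pt_scale F(12) by simp
    have p1: "A + B = (\<alpha> + \<beta> - 2 * \<beta> / k) *\<^sub>R (PI + PV) + (2 * \<beta> / k) *\<^sub>R (PI + PV + k *\<^sub>R Pp)"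
      unfolding A_def B_def using assms(2) by (simp add: vec_eq_iff algebra_simps)
    have p1c: "\<alpha> + \<beta> - 2 * \<beta> / k \<ge> 0"
    proof -
      have "2 * \<beta> / k \<le> 2 * \<beta>" using b0 assms(2) by (simp add: divide_le_eq mult_le_cancel_left) (metis mult_left_mono mult.right_neutral)
      then show ?thesis using ab0 by simp
    qed
    have p2: "A - B = (\<alpha> - \<beta>) *\<^sub>R (PI - PV) + 0 *\<^sub>R (PI - PV)"
      unfolding A_def B_def by (simp add: vec_eq_iff algebra_simps)
    have p3: "A + B + k' *\<^sub>R C = (k / k') *\<^sub>R (PI + PV + k *\<^sub>R Pp) + 0 *\<^sub>R (PI + PV)"
    proof -
      have "A + B + k' *\<^sub>R C = (\<alpha> + \<beta> + k' * \<beta>) *\<^sub>R (PI + PV) + (2 * \<beta> + k' * \<alpha>) *\<^sub>R Pp"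
        unfolding A_def B_def C_def by (simp add: vec_eq_iff algebra_simps)
      also have "\<dots> = (k / k') *\<^sub>R (PI + PV) + (k / k' * k) *\<^sub>R Pp"
      proof -
        have h1: "\<alpha> + \<beta> + k' * \<beta> = k / k'" unfolding \<alpha>_def by (simp add: algebra_simps)
        have h2: "2 * \<beta> + k' * \<alpha> = k / k' * k" using c1 k1
          by (simp add: field_simps power2_eq_square)
        show ?thesis by (simp only: h1 h2)
      qed
      also have "\<dots> = (k / k') *\<^sub>R (PI + PV + k *\<^sub>R Pp) + 0 *\<^sub>R (PI + PV)"
        by (simp add: scaleR_add_right)
      finally show ?thesis .
    qed
    have kb: "2 * \<beta> / k \<ge> 0" using b0 assms(2) by simp
    have kk0: "k / k' \<ge> 0" using k1 assms(2) by simp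
    have ps1: "psd (A + B)" unfolding p1 by (rule psd_lin[OF F(8) F(10) p1c kb])
    have ps2: "psd (A - B)" unfolding p2 by (rule psd_lin[OF F(9) F(9) ab0]) simp
    have ps3: "psd (A + B + k' *\<^sub>R C)" unfolding p3 by (rule psd_lin[OF F(10) F(8) kk0]) simp
    note ps = ps1 ps2 ps3
    have "feasible L Y k' A B C"
      unfolding feasible_def using sA e1 e2 e3 e4 ps tr mp by simp
    then show ?thesis using X by blast
  qed
qed

end
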